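(* Let $p,n\in\mathbb N$ with $p\ge n\ge 7$, and let $G\in Ex(p;T_n^1)$. If $G$ is connected, then $\Delta(G)=n-4$ and $e(G)=\big[\tfrac{(n-4)p}{2}\big]$.
   Context: All graphs are finite and simple; a graph "contains" $H$ if it has a subgraph isomorphic to $H$. $[x]$ denotes the greatest integer not exceeding $x$; $e(G)$ is the number of edges and $\Delta(G)$ the maximum degree of $G$. For a graph $L$ and $p\in\mathbb N$, $ex(p;L)$ is the maximum number of edges in a graph on $p$ vertices containing no copy of $L$, and $Ex(p;L)$ is the set of graphs on $p$ vertices containing no copy of $L$ and having exactly $ex(p;L)$ edges. For $n\ge 5$, $T_n^1$ is the tree with vertex set $\{v_0,\ldots,v_{n-1}\}$ and edge set $\{v_0v_1,\ldots,v_0v_{n-3},\,v_{n-4}v_{n-2},\,v_{n-3}v_{n-1}\}$. *)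

theory Defs
  imports Main
begin

definition sgraph :: "'a set \<Rightarrow> 'a set set \<Rightarrow> bool" where
  "sgraph V E \<longleftrightarrow> finite V \<and> (\<forall>e\<in>E. \<exists>u v. e = {u, v} \<and> u \<noteq> v \<and> u \<in> V \<and> v \<in> V)"

definition contains :: "'a set \<Rightarrow> 'a set set \<Rightarrow> 'b set \<Rightarrow> 'b set set \<Rightarrow> bool" where
  "contains V E VH EH \<longleftrightarrow>
     (\<exists>f. inj_on f VH \<and> f ` VH \<subseteq> V \<and> (\<forall>e\<in>EH. f ` e \<in> E))"

definition ex_num :: "nat \<Rightarrow> 'b set \<Rightarrow> 'b set set \<Rightarrow> nat" where
  "ex_num p LV LE = Max {card E | E. sgraph {0..<p} E \<and> \<not> contains {0..<p} E LV LE}"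

definition in_Ex :: "nat \<Rightarrow> 'b set \<Rightarrow> 'b set set \<Rightarrow> 'a set \<Rightarrow> 'a set set \<Rightarrow> bool" where
  "in_Ex p LV LE V E \<longleftrightarrow> sgraph V E \<and> card V = p \<and> \<not> contains V E LV LE
      \<and> card E = ex_num p LV LE"

definition degree :: "'a set set \<Rightarrow> 'a \<Rightarrow> nat" where
  "degree E v = card {e \<in> E. v \<in> e}"

definition max_degree :: "'a set \<Rightarrow> 'a set set \<Rightarrow> nat" where
  "max_degree V E = Max (degree E ` V)"

definition connected_graph :: "'a set \<Rightarrow> 'a set set \<Rightarrow> bool" where
  "connected_graph V E \<longleftrightarrow> (\<forall>u\<in>V. \<forall>v\<in>V. (\<lambda>x y. {x, y} \<in> E)\<^sup>*\<^sup>* u v)"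

definition T1_verts :: "nat \<Rightarrow> nat set" where
  "T1_verts n = {0..<n}"

definition T1_edges :: "nat \<Rightarrow> nat set set" where
  "T1_edges n = {{0, i} | i. 1 \<le> i \<and> i \<le> n - 3} \<union> {{n - 4, n - 2}, {n - 3, n - 1}}"

end

theory Submission
  imports Defs
begin


lemma sg_edge: "sgraph V E \<Longrightarrow> e \<in> E \<Longrightarrow> \<exists>x y. e = {x,y} \<and> x \<noteq> y \<and> x \<in> V \<and> y \<in> V"
  by (auto simp: sgraph_def)

lemma sg_edge2: "sgraph V E \<Longrightarrow> {x,y} \<in> E \<Longrightarrow> x \<noteq> y \<and> x \<in> V \<and> y \<in> V"
  unfolding sgraph_def by (metis doubleton_eq_iff insertI1)

lemma sg_finE: "sgraph V E \<Longrightarrow> finite E"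
proof -
  assume s: "sgraph V E"
  have "E \<subseteq> Pow V" using s by (auto simp: sgraph_def)
  moreover have "finite V" using s by (simp add: sgraph_def)
  ultimately show ?thesis by (meson finite_Pow_iff finite_subset)
qed

lemma edges_in_choose:
  assumes s: "sgraph V E" and X: "X \<subseteq> V"
  shows "card {e\<in>E. e \<subseteq> X} \<le> card X choose 2"
proof -
  have fX: "finite X" using s X by (auto simp: sgraph_def intro: finite_subset)
  have "{e\<in>E. e \<subseteq> X} \<subseteq> {B. B \<subseteq> X \<and> card B = 2}"
    using s by (auto simp: sgraph_def)
  moreover have "finite {B. B \<subseteq> X \<and> card B = 2}" using fX by simp
  ultimately have "card {e\<in>E. e \<subseteq> X} \<le> card {B. B \<subseteq> X \<and> card B = 2}" by (rule card_mono[rotated])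
  also have "\<dots> = card X choose 2" using n_subsets[OF fX] by simp
  finally show ?thesis .
qed

lemma contains_deg:
  assumes s: "sgraph V E" and n: "n \<ge> 7" and c: "contains V E (T1_verts n) (T1_edges n)"
  shows "\<exists>u\<in>V. degree E u \<ge> n - 3"
proof -
  obtain f where inj: "inj_on f {0..<n}" and im: "f ` {0..<n} \<subseteq> V"
    and ed: "\<forall>e\<in>T1_edges n. f ` e \<in> E"
    using c by (auto simp: contains_def T1_verts_def)
  let ?g = "\<lambda>i. {f 0, f i}"
  have "?g ` {1..n-3} \<subseteq> {e\<in>E. f 0 \<in> e}"
  proof
    fix e assume "e \<in> ?g ` {1..n-3}"
    then obtain i where i: "1 \<le> i" "i \<le> n-3" and e: "e = {f 0, f i}" by auto
    have "{0,i} \<in> T1_edges n" using i by (auto simp: T1_edges_def)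
    then show "e \<in> {e\<in>E. f 0 \<in> e}" using ed e by auto
  qed
  moreover have "inj_on ?g {1..n-3}"
  proof (rule inj_onI)
    fix i j assume i: "i \<in> {1..n-3}" and j: "j \<in> {1..n-3}" and eq: "{f 0, f i} = {f 0, f j}"
    have "f i \<noteq> f 0" using inj i n by (auto dest: inj_onD)
    have "f j \<noteq> f 0" using inj j n by (auto dest: inj_onD)
    then have "f i = f j" using eq \<open>f i \<noteq> f 0\<close> by (metis doubleton_eq_iff)
    then show "i = j" using inj i j n by (auto dest: inj_onD)
  qed
  moreover have "finite {e\<in>E. f 0 \<in> e}" using sg_finE[OF s] by simp
  ultimately have "card {1..n-3} \<le> card {e\<in>E. f 0 \<in> e}"
    by (metis card_image card_mono)
  moreover have "f 0 \<in> V" using im n by auto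
  ultimately show ?thesis by (auto simp: degree_def)
qed




lemma ex_num_ge:
  assumes s: "sgraph V E" and cV: "card V = p" and nc: "\<not> contains V E (T1_verts n) (T1_edges n)"
  shows "card E \<le> ex_num p (T1_verts n) (T1_edges n)"
proof -
  have fV: "finite V" using s by (simp add: sgraph_def)
  obtain g where g: "bij_betw g V {0..<p}" using ex_bij_betw_finite_nat[OF fV] cV by auto
  have ginj: "inj_on g V" using g by (simp add: bij_betw_def)
  define E2 where "E2 = (\<lambda>e. g ` e) ` E"
  have EV: "\<forall>e\<in>E. e \<subseteq> V" using s by (auto simp: sgraph_def)
  have inj2: "inj_on (\<lambda>e. g ` e) E"
    by (rule inj_onI) (metis EV ginj inj_on_image_eq_iff)
  have cE2: "card E2 = card E" unfolding E2_def using inj2 by (simp add: card_image)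
  have s2: "sgraph {0..<p} E2"
    unfolding sgraph_def E2_def
  proof (intro conjI ballI)
    fix e assume "e \<in> (\<lambda>e. g ` e) ` E"
    then obtain e0 where e0: "e0 \<in> E" "e = g ` e0" by auto
    then obtain x y where "e0 = {x,y}" "x \<noteq> y" "x \<in> V" "y \<in> V" using sg_edge[OF s] by blast
    moreover have "g x \<noteq> g y" using \<open>x \<noteq> y\<close> \<open>x \<in> V\<close> \<open>y \<in> V\<close> ginj by (auto dest: inj_onD)
    moreover have "g x \<in> {0..<p}" "g y \<in> {0..<p}" using \<open>x \<in> V\<close> \<open>y \<in> V\<close> g by (auto simp: bij_betw_def)
    ultimately show "\<exists>u v. e = {u, v} \<and> u \<noteq> v \<and> u \<in> {0..<p} \<and> v \<in> {0..<p}"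
      using e0 by blast
  qed simp
  have nc2: "\<not> contains {0..<p} E2 (T1_verts n) (T1_edges n)"
  proof
    assume "contains {0..<p} E2 (T1_verts n) (T1_edges n)"
    then obtain f where fi: "inj_on f (T1_verts n)" and fim: "f ` T1_verts n \<subseteq> {0..<p}"
      and fe: "\<forall>e\<in>T1_edges n. f ` e \<in> E2" by (auto simp: contains_def)
    define h where "h = the_inv_into V g \<circ> f"
    have hi: "inj_on h (T1_verts n)" unfolding h_def
      using fi fim g inj_on_the_inv_into bij_betw_def
      by (metis comp_inj_on inj_on_subset)
    have hv: "\<forall>z\<in>{0..<p}. the_inv_into V g z \<in> V \<and> g (the_inv_into V g z) = z"
      using g by (auto simp: bij_betw_def the_inv_into_into f_the_inv_into_f)
    have him: "h ` T1_verts n \<subseteq> V" unfolding h_def using fim hv by auto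
    have "\<forall>e\<in>T1_edges n. h ` e \<in> E"
    proof
      fix e assume e: "e \<in> T1_edges n"
      then obtain e0 where e0: "e0 \<in> E" "f ` e = g ` e0" using fe by (auto simp: E2_def)
      have "h ` e = the_inv_into V g ` (f ` e)" by (simp add: h_def image_comp)
      also have "\<dots> = the_inv_into V g ` (g ` e0)" using e0 by simp
      also have "\<dots> = e0" using EV e0(1) ginj
        by (simp add: image_comp the_inv_into_f_f subset_iff image_cong[of _ _ _ id] )
      finally show "h ` e \<in> E" using e0 by simp
    qed
    then have "contains V E (T1_verts n) (T1_edges n)" using hi him by (auto simp: contains_def)
    then show False using nc by simp
  qed
  have fin: "finite {card E | E. sgraph {0..<p} E \<and> \<not> contains {0..<p} E (T1_verts n) (T1_edges n)}"
  proof -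
    have "{E. sgraph {0..<p} E} \<subseteq> Pow (Pow {0..<p})" by (auto simp: sgraph_def)
    then have "finite {E. sgraph {0..<p} E}" by (meson finite_Pow_iff finite_atLeastLessThan finite_subset)
    then show ?thesis by (simp add: setcompr_eq_image)
  qed
  show ?thesis unfolding ex_num_def using s2 nc2 cE2
    by (metis (mono_tags, lifting) Max_ge fin mem_Collect_eq)
qed

lemma T1_edge_0: "1 \<le> i \<Longrightarrow> i \<le> n - 3 \<Longrightarrow> {0,i} \<in> T1_edges n"
  by (auto simp: T1_edges_def)

lemma replacement:
  assumes n: "n \<ge> 7" and G: "in_Ex p (T1_verts n) (T1_edges n) V E"
    and SV: "S \<subseteq> V" and cS: "card S < n"
  shows "card S choose 2 \<le> card {e\<in>E. e \<inter> S \<noteq> {}}"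
proof -
  have s: "sgraph V E" and cV: "card V = p" and nc: "\<not> contains V E (T1_verts n) (T1_edges n)"
    and cE: "card E = ex_num p (T1_verts n) (T1_edges n)" using G by (auto simp: in_Ex_def)
  have fV: "finite V" using s by (simp add: sgraph_def)
  have fS: "finite S" using SV fV finite_subset by blast
  have fE: "finite E" using sg_finE[OF s] .
  define K where "K = {B. B \<subseteq> S \<and> card B = 2}"
  define E1 where "E1 = {e\<in>E. e \<inter> S = {}}"
  define E' where "E' = E1 \<union> K"
  have cK: "card K = card S choose 2" using n_subsets[OF fS] by (simp add: K_def)
  have fK: "finite K" using fS by (simp add: K_def)
  have disj: "E1 \<inter> K = {}"
  proof -
    have "\<And>B. B \<in> K \<Longrightarrow> B \<inter> S \<noteq> {}"
      unfolding K_def by (auto simp: card_2_iff)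
    then show ?thesis unfolding E1_def by blast
  qed
  have cE': "card E' = card E1 + card K" unfolding E'_def
    using disj fK fE by (simp add: E1_def card_Un_disjoint)
  have split: "card E = card E1 + card {e\<in>E. e \<inter> S \<noteq> {}}"
  proof -
    have "E = E1 \<union> {e\<in>E. e \<inter> S \<noteq> {}}" by (auto simp: E1_def)
    moreover have "E1 \<inter> {e\<in>E. e \<inter> S \<noteq> {}} = {}" by (auto simp: E1_def)
    ultimately show ?thesis using fE card_Un_disjoint[of E1 "{e\<in>E. e \<inter> S \<noteq> {}}"] by (simp add: E1_def)
  qed
  have s': "sgraph V E'"
    unfolding sgraph_def
  proof (intro conjI ballI)
    show "finite V" by fact
    fix e assume "e \<in> E'"
    then show "\<exists>u v. e = {u, v} \<and> u \<noteq> v \<and> u \<in> V \<and> v \<in> V"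
    proof (cases "e \<in> E1")
      case True then show ?thesis using s by (auto simp: sgraph_def E1_def)
    next
      case False
      then have "e \<in> K" using \<open>e \<in> E'\<close> by (auto simp: E'_def)
      then obtain x y where "e = {x,y}" "x \<noteq> y" "e \<subseteq> S" by (auto simp: K_def card_2_iff)
      then show ?thesis using SV by blast
    qed
  qed
  have side: "\<And>a b. {a,b} \<in> E' \<Longrightarrow> (a \<in> S \<longleftrightarrow> b \<in> S)"
  proof -
    fix a b assume "{a,b} \<in> E'"
    then have "{a,b} \<in> E1 \<or> {a,b} \<in> K" by (simp add: E'_def)
    then show "(a \<in> S \<longleftrightarrow> b \<in> S)"
    proof
      assume "{a,b} \<in> E1" then have "{a,b} \<inter> S = {}" by (simp add: E1_def)
      then show ?thesis by blast
    next
      assume "{a,b} \<in> K" then have "{a,b} \<subseteq> S" by (simp add: K_def)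
      then show ?thesis by blast
    qed
  qed
  have nc': "\<not> contains V E' (T1_verts n) (T1_edges n)"
  proof
    assume "contains V E' (T1_verts n) (T1_edges n)"
    then obtain f where fi: "inj_on f {0..<n}" and fim: "f ` {0..<n} \<subseteq> V"
      and fe: "\<forall>e\<in>T1_edges n. f ` e \<in> E'" by (auto simp: contains_def T1_verts_def)
    have e0: "\<And>i. 1 \<le> i \<Longrightarrow> i \<le> n - 3 \<Longrightarrow> (f i \<in> S \<longleftrightarrow> f 0 \<in> S)"
    proof -
      fix i assume "1 \<le> i" "i \<le> n - 3"
      then have "{0,i} \<in> T1_edges n" by (rule T1_edge_0)
      then have "f ` {0,i} \<in> E'" using fe by blast
      then have "{f 0, f i} \<in> E'" by simp
      then show "(f i \<in> S \<longleftrightarrow> f 0 \<in> S)" using side by blast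
    qed
    have "{n-4, n-2} \<in> T1_edges n" "{n-3, n-1} \<in> T1_edges n" by (auto simp: T1_edges_def)
    then have "f ` {n-4, n-2} \<in> E'" "f ` {n-3, n-1} \<in> E'" using fe by blast+
    then have "{f (n-4), f (n-2)} \<in> E'" "{f (n-3), f (n-1)} \<in> E'" by simp_all
    then have "f (n-2) \<in> S \<longleftrightarrow> f (n-4) \<in> S" "f (n-1) \<in> S \<longleftrightarrow> f (n-3) \<in> S" using side by blast+
    moreover have "f (n-4) \<in> S \<longleftrightarrow> f 0 \<in> S" "f (n-3) \<in> S \<longleftrightarrow> f 0 \<in> S" using e0 n by auto
    ultimately have a: "f (n-2) \<in> S \<longleftrightarrow> f 0 \<in> S" "f (n-1) \<in> S \<longleftrightarrow> f 0 \<in> S" by blast+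
    have all: "\<And>i. i < n \<Longrightarrow> (f i \<in> S \<longleftrightarrow> f 0 \<in> S)"
    proof -
      fix i assume i: "i < n"
      have "i = 0 \<or> (1 \<le> i \<and> i \<le> n - 3) \<or> i = n - 2 \<or> i = n - 1" using i by linarith
      then show "(f i \<in> S \<longleftrightarrow> f 0 \<in> S)" using e0 a by blast
    qed
    show False
    proof (cases "f 0 \<in> S")
      case True
      then have "f ` {0..<n} \<subseteq> S" using all by auto
      then have "card (f ` {0..<n}) \<le> card S" using fS card_mono by blast
      then show False using fi cS by (simp add: card_image)
    next
      case False
      then have out: "\<forall>i<n. f i \<notin> S" using all by auto
      have "\<forall>e\<in>T1_edges n. f ` e \<in> E"
      proof
        fix e assume e: "e \<in> T1_edges n"
        have "e \<subseteq> {0..<n}" using e n by (auto simp: T1_edges_def)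
        then have "f ` e \<inter> S = {}" using out by auto
        moreover have "f ` e \<in> E'" using fe e by blast
        moreover have "f ` e \<noteq> {}" using e by (auto simp: T1_edges_def)
        ultimately show "f ` e \<in> E" by (auto simp: E'_def E1_def K_def)
      qed
      then have "contains V E (T1_verts n) (T1_edges n)" using fi fim
        by (auto simp: contains_def T1_verts_def)
      then show False using nc by simp
    qed
  qed
  have "card E' \<le> card E" using ex_num_ge[OF s' cV nc'] cE by simp
  then show ?thesis using cE' split cK by linarith
qed

lemma emb:
  assumes s: "sgraph V E" and n: "n \<ge> 7" and v: "v \<in> V"
    and va: "{v,a} \<in> E" and vb: "{v,b} \<in> E" and ax: "{a,x} \<in> E" and by': "{b,y} \<in> E"
    and d: "distinct [v,a,b,x,y]"
    and R: "card ({u. {v,u} \<in> E} - {a,b,x,y}) \<ge> n - 5"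
  shows "contains V E (T1_verts n) (T1_edges n)"
proof -
  define N where "N = {u. {v,u} \<in> E}"
  define R where "R = N - {a,b,x,y}"
  have NV: "N \<subseteq> V" using s by (auto simp: N_def dest: sg_edge2)
  have fV: "finite V" using s by (simp add: sgraph_def)
  have fR: "finite R" using NV fV R_def finite_subset by blast
  have vN: "v \<notin> N" using s sg_edge2[of V E v v] by (auto simp: N_def)
  obtain g where gR: "g ` {1..n-5} \<subseteq> R" and gi: "inj_on g {1..n-5}"
    using card_le_inj[of "{1..n-5}" R] fR R by (auto simp: R_def N_def)
  define f where "f = (\<lambda>i. if i = 0 then v else if i \<le> n-5 then g i else if i = n-4 then a
     else if i = n-3 then b else if i = n-2 then x else y)"
  have gN: "\<And>i. 1 \<le> i \<Longrightarrow> i \<le> n-5 \<Longrightarrow> g i \<in> N \<and> g i \<noteq> a \<and> g i \<noteq> b \<and> g i \<noteq> x \<and> g i \<noteq> y \<and> g i \<noteq> v"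
  proof -
    fix i assume "1 \<le> i" "i \<le> n-5"
    then have "g i \<in> R" using gR by auto
    then show "g i \<in> N \<and> g i \<noteq> a \<and> g i \<noteq> b \<and> g i \<noteq> x \<and> g i \<noteq> y \<and> g i \<noteq> v"
      using vN by (auto simp: R_def)
  qed
  have aV: "a \<in> V" "b \<in> V" "x \<in> V" "y \<in> V" using s ax by' by (auto dest: sg_edge2)
  have aN: "a \<in> N" "b \<in> N" using va vb by (auto simp: N_def)
  have f0: "f 0 = v" and fa: "f (n-4) = a" and fb: "f (n-3) = b" and fx: "f (n-2) = x"
    and fy: "f (n-1) = y" and fg: "\<And>i. 1 \<le> i \<Longrightarrow> i \<le> n-5 \<Longrightarrow> f i = g i"
    using n by (auto simp: f_def)
  have rng: "\<And>i. i < n \<Longrightarrow> i = 0 \<or> (1 \<le> i \<and> i \<le> n-5) \<or> i = n-4 \<or> i = n-3 \<or> i = n-2 \<or> i = n-1"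
    by linarith
  have F: "\<And>i. i < n \<Longrightarrow> (i = 0 \<and> f i = v) \<or> (1 \<le> i \<and> i \<le> n-5 \<and> f i = g i) \<or> (i = n-4 \<and> f i = a)
      \<or> (i = n-3 \<and> f i = b) \<or> (i = n-2 \<and> f i = x) \<or> (i = n-1 \<and> f i = y)"
  proof -
    fix i assume "i < n"
    from rng[OF this] show "?thesis i" using f0 fa fb fx fy fg by blast
  qed
  have inj: "inj_on f {0..<n}"
  proof (rule inj_onI)
    fix i j assume i: "i \<in> {0..<n}" and j: "j \<in> {0..<n}" and eq: "f i = f j"
    have "i < n" "j < n" using i j by auto
    have gi': "1 \<le> i \<Longrightarrow> i \<le> n-5 \<Longrightarrow> 1 \<le> j \<Longrightarrow> j \<le> n-5 \<Longrightarrow> g i = g j \<Longrightarrow> i = j"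
      using gi by (auto dest: inj_onD)
    show "i = j"
      using F[OF \<open>i < n\<close>] F[OF \<open>j < n\<close>] gN[of i] gN[of j] gi' d eq n
      by (elim disjE conjE) auto
  qed
  have im: "f ` {0..<n} \<subseteq> V"
  proof
    fix z assume "z \<in> f ` {0..<n}"
    then obtain i where i: "i < n" "z = f i" by auto
    show "z \<in> V" using rng[OF i(1)]
      by (elim disjE conjE) (use i v aV gN NV f0 fa fb fx fy fg in auto)
  qed
  have fvN: "\<And>i. 1 \<le> i \<Longrightarrow> i \<le> n-3 \<Longrightarrow> f i \<in> N"
  proof -
    fix i assume i: "1 \<le> i" "i \<le> n-3"
    then have "(1 \<le> i \<and> i \<le> n-5) \<or> i = n-4 \<or> i = n-3" by linarith
    then show "f i \<in> N" using gN fg fa fb aN by auto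
  qed
  have ed: "\<forall>e\<in>T1_edges n. f ` e \<in> E"
  proof
    fix e assume "e \<in> T1_edges n"
    then consider i where "1 \<le> i" "i \<le> n-3" "e = {0,i}" | "e = {n-4,n-2}" | "e = {n-3,n-1}"
      by (auto simp: T1_edges_def)
    then show "f ` e \<in> E"
    proof cases
      case (1 i) then show ?thesis using fvN[OF 1(1,2)] f0 by (auto simp: N_def)
    qed (use ax by' fa fb fx fy in auto)
  qed
  show ?thesis using inj im ed by (auto simp: contains_def T1_verts_def)
qed

lemma card_nbrs:
  assumes s: "sgraph V E"
  shows "card {u. {v,u} \<in> E} = degree E v"
proof -
  have "bij_betw (\<lambda>u. {v,u}) {u. {v,u} \<in> E} {e\<in>E. v \<in> e}"
  proof (rule bij_betwI')
    fix x y assume "x \<in> {u. {v,u} \<in> E}" "y \<in> {u. {v,u} \<in> E}"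
    then have "x \<noteq> v" "y \<noteq> v" using s by (auto dest: sg_edge2)
    then show "({v, x} = {v, y}) = (x = y)" by (metis doubleton_eq_iff)
  next
    fix x assume "x \<in> {u. {v,u} \<in> E}" then show "{v,x} \<in> {e\<in>E. v \<in> e}" by auto
  next
    fix e assume "e \<in> {e\<in>E. v \<in> e}"
    then obtain a b where ab: "e = {a,b}" "e \<in> E" "v \<in> e" using s by (auto dest: sg_edge)
    then have "v = a \<or> v = b" by auto
    then show "\<exists>x\<in>{u. {v,u} \<in> E}. e = {v,x}"
    proof
      assume "v = a" then show ?thesis using ab by auto
    next
      assume "v = b" then have "e = {v,a}" using ab by (simp add: insert_commute)
      then show ?thesis using ab by auto
    qed
  qed
  then show ?thesis by (simp add: degree_def bij_betw_same_card)
qed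

lemma conn_edge:
  assumes c: "connected_graph V E" and u: "u \<in> A" and AV: "A \<subseteq> V" and w: "w \<in> V" "w \<notin> A"
  shows "\<exists>s t. {s,t} \<in> E \<and> s \<in> A \<and> t \<notin> A"
proof -
  have r: "(\<lambda>x y. {x, y} \<in> E)\<^sup>*\<^sup>* u w" using c u AV w by (auto simp: connected_graph_def)
  have "\<And>z. (\<lambda>x y. {x, y} \<in> E)\<^sup>*\<^sup>* u z \<Longrightarrow> z \<notin> A \<Longrightarrow> \<exists>s t. {s,t} \<in> E \<and> s \<in> A \<and> t \<notin> A"
  proof -
    fix z assume "(\<lambda>x y. {x, y} \<in> E)\<^sup>*\<^sup>* u z" "z \<notin> A"
    then show "\<exists>s t. {s,t} \<in> E \<and> s \<in> A \<and> t \<notin> A"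
    proof (induction rule: rtranclp_induct)
      case base then show ?case using u by simp
    next
      case (step y z)
      then show ?case by (cases "y \<in> A") auto
    qed
  qed
  then show ?thesis using r w by blast
qed

lemma handshake:
  assumes s: "sgraph V E"
  shows "(\<Sum>u\<in>V. degree E u) = 2 * card E"
proof -
  have fV: "finite V" using s by (simp add: sgraph_def)
  have fE: "finite E" using sg_finE[OF s] .
  have "(\<Sum>u\<in>V. degree E u) = (\<Sum>u\<in>V. \<Sum>e\<in>E. if u \<in> e then 1 else 0)"
    unfolding degree_def using fE by (simp add: sum.inter_filter[symmetric])
  also have "\<dots> = (\<Sum>e\<in>E. \<Sum>u\<in>V. if u \<in> e then 1 else 0)" by (rule sum.swap)
  also have "\<dots> = (\<Sum>e\<in>E. 2)"
  proof (rule sum.cong[OF refl])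
    fix e assume "e \<in> E"
    then obtain x y where "e = {x,y}" "x \<noteq> y" "x \<in> V" "y \<in> V" using s by (auto dest: sg_edge)
    then have "{u\<in>V. u \<in> e} = {x,y}" by auto
    then have "(\<Sum>u\<in>V. if u \<in> e then 1 else 0) = card {x,y}"
      using fV by (simp add: sum.inter_filter[symmetric])
    then show "(\<Sum>u\<in>V. if u \<in> e then 1 else 0) = (2::nat)"
      using \<open>x \<noteq> y\<close> by simp
  qed
  finally show ?thesis by simp
qed




lemma intersecting:
  assumes two: "\<forall>e\<in>F. \<exists>x y. e = {x,y} \<and> x \<noteq> y" and int: "\<forall>e\<in>F. \<forall>f\<in>F. e \<inter> f \<noteq> {}"
  shows "(\<exists>c. \<forall>e\<in>F. c \<in> e) \<or> card F \<le> 3"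
proof (cases "F = {}")
  case True then show ?thesis by simp
next
  case False
  then obtain e0 where e0: "e0 \<in> F" by auto
  then obtain x y where xy: "e0 = {x,y}" "x \<noteq> y" using two by blast
  show ?thesis
  proof (cases "(\<forall>e\<in>F. x \<in> e) \<or> (\<forall>e\<in>F. y \<in> e)")
    case True then show ?thesis by blast
  next
    case False
    then obtain f g where f: "f \<in> F" "x \<notin> f" and g: "g \<in> F" "y \<notin> g" by blast
    obtain f1 f2 where ff: "f = {f1,f2}" "f1 \<noteq> f2" using two f by blast
    obtain g1 g2 where gg: "g = {g1,g2}" "g1 \<noteq> g2" using two g by blast
    have "e0 \<inter> f \<noteq> {}" using int e0 f(1) by blast
    then have "y \<in> f" using xy f(2) by blast
    then obtain z where fz: "f = {y,z}" "z \<noteq> y"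
    proof (cases "y = f1")
      case True then show ?thesis using that ff by blast
    next
      case False then have "y = f2" using \<open>y \<in> f\<close> ff by blast
      then show ?thesis using that[of f1] ff by (simp add: insert_commute)
    qed
    have "e0 \<inter> g \<noteq> {}" using int e0 g(1) by blast
    then have "x \<in> g" using xy g(2) by blast
    then obtain z' where gz: "g = {x,z'}" "z' \<noteq> x"
    proof (cases "x = g1")
      case True then show ?thesis using that gg by blast
    next
      case False then have "x = g2" using \<open>x \<in> g\<close> gg by blast
      then show ?thesis using that[of g1] gg by (simp add: insert_commute)
    qed
    have xz: "x \<noteq> z" using f fz by auto
    have "f \<inter> g \<noteq> {}" using int f(1) g(1) by blast
    then have "z = z'" using fz gz f g by blast
    have "F \<subseteq> {{x,y},{y,z},{x,z}}"
    proof
      fix h assume h: "h \<in> F"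
      then obtain h1 h2 where hh: "h = {h1,h2}" "h1 \<noteq> h2" using two by blast
      have "h \<inter> e0 \<noteq> {}" "h \<inter> f \<noteq> {}" "h \<inter> g \<noteq> {}" using int h e0 f(1) g(1) by blast+
      then have "h \<inter> {x,y} \<noteq> {}" "h \<inter> {y,z} \<noteq> {}" "h \<inter> {x,z} \<noteq> {}" using xy fz gz \<open>z = z'\<close> by simp_all
      have tw: "\<And>a b. a \<in> h \<Longrightarrow> b \<in> h \<Longrightarrow> a \<noteq> b \<Longrightarrow> h = {a,b}" using hh by blast
      have "h = {x,y} \<or> h = {y,z} \<or> h = {x,z}"
      proof (cases "x \<in> h")
        case True
        show ?thesis
        proof (cases "y \<in> h")
          case True then show ?thesis using tw \<open>x \<in> h\<close> xy by blast
        next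
          case False
          then have "z \<in> h" using \<open>h \<inter> {y,z} \<noteq> {}\<close> by blast
          then show ?thesis using tw \<open>x \<in> h\<close> xz by blast
        qed
      next
        case False
        then have "y \<in> h" "z \<in> h" using \<open>h \<inter> {x,y} \<noteq> {}\<close> \<open>h \<inter> {x,z} \<noteq> {}\<close> by blast+
        then show ?thesis using tw fz by blast
      qed
      then show "h \<in> {{x,y},{y,z},{x,z}}" by blast
    qed
    then have "card F \<le> card {{x,y},{y,z},{x,z}}" by (rule card_mono[rotated]) simp
    also have "\<dots> \<le> 3" by (simp add: card_insert_if)
    finally show ?thesis by simp
  qed
qed




definition shf :: "nat \<Rightarrow> nat \<Rightarrow> nat \<Rightarrow> nat" where
  "shf p i j = (if i + j < p then i + j else i + j - p)"

lemma shf_cases: "i < p \<Longrightarrow> j < p \<Longrightarrow> (shf p i j = i + j \<and> i + j < p) \<or> (shf p i j + p = i + j \<and> p \<le> i + j)"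
  by (auto simp: shf_def)

lemma shf_inj1: "i < p \<Longrightarrow> j < p \<Longrightarrow> j' < p \<Longrightarrow> shf p i j = shf p i j' \<Longrightarrow> j = j'"
  unfolding shf_def by (simp split: if_splits)

lemma shf_inj2: "i < p \<Longrightarrow> i' < p \<Longrightarrow> 1 \<le> j \<Longrightarrow> 1 \<le> j' \<Longrightarrow> j + j' < p \<Longrightarrow> i = shf p i' j' \<Longrightarrow> shf p i j = i' \<Longrightarrow> False"
  unfolding shf_def by (simp split: if_splits)

lemma shf_inv: "i < p \<Longrightarrow> j \<le> p \<Longrightarrow> u = shf p i j \<Longrightarrow> i = (if j \<le> u then u - j else u + p - j)"
  unfolding shf_def by (auto split: if_splits)

lemma shf_M: "i < p \<Longrightarrow> i' < m \<Longrightarrow> 1 \<le> j \<Longrightarrow> j + 2 \<le> m \<Longrightarrow> 2*m \<le> p \<Longrightarrow> p \<le> 2*m+1 \<Longrightarrow>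
   (i = i' \<and> shf p i j = i'+m) \<or> (i = i'+m \<and> shf p i j = i') \<Longrightarrow> False"
  unfolding shf_def by (auto split: if_splits)

lemma lower_bound:
  assumes n: "n \<ge> 7" and p: "p \<ge> n"
  shows "(n-4)*p div 2 \<le> ex_num p (T1_verts n) (T1_edges n)"
proof -
  define k where "k = n - 4"
  define h where "h = k div 2"
  define m where "m = p div 2"
  define sh where "sh = shf p"
  define ush where "ush = (\<lambda>u j. if j \<le> u then u - j else u + p - j)"
  define C1 where "C1 = (\<lambda>(i,j). {i, sh i j}) ` ({0..<p} \<times> {1..h})"
  define M where "M = (if odd k then (\<lambda>i. {i, i+m}) ` {0..<m} else {})"
  define Ec where "Ec = C1 \<union> M"
  have k3: "k \<ge> 3" and kp: "k + 4 \<le> p" using n p by (auto simp: k_def)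
  have h1: "h \<ge> 1" and h2: "2*h \<le> k" and h3: "k \<le> 2*h + 1" using k3 by (auto simp: h_def)
  have m1: "2*m \<le> p" "p \<le> 2*m + 1" by (auto simp: m_def)
  have hm: "h + 2 \<le> m" using m1 kp h2 by linarith
  have shp: "\<And>i j. i < p \<Longrightarrow> j \<le> h \<Longrightarrow> sh i j < p" using kp h2 by (auto simp: sh_def shf_def)
  have shne: "\<And>i j. i < p \<Longrightarrow> 1 \<le> j \<Longrightarrow> j \<le> h \<Longrightarrow> sh i j \<noteq> i" using kp h2 by (auto simp: sh_def shf_def)
  have sg: "sgraph {0..<p} Ec"
    unfolding sgraph_def
  proof (intro conjI ballI)
    fix e assume "e \<in> Ec"
    then consider (a) i j where "i < p" "1 \<le> j" "j \<le> h" "e = {i, sh i j}"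
      | (b) i where "i < m" "e = {i, i+m}"
      by (auto simp: Ec_def C1_def M_def split: if_splits)
    then show "\<exists>u v. e = {u, v} \<and> u \<noteq> v \<and> u \<in> {0..<p} \<and> v \<in> {0..<p}"
    proof cases
      case a
      have "sh i j < p" "sh i j \<noteq> i" using shp shne a by auto
      then show ?thesis using a by (intro exI[of _ i] exI[of _ "sh i j"]) auto
    next
      case b
      have "i \<noteq> i + m" "i < p" "i + m < p" using b m1 hm by auto
      then show ?thesis using b by (intro exI[of _ i] exI[of _ "i+m"]) auto
    qed
  qed simp
  have injC: "inj_on (\<lambda>(i,j). {i, sh i j}) ({0..<p} \<times> {1..h})"
  proof (rule inj_onI)
    fix x y assume x: "x \<in> {0..<p} \<times> {1..h}" and y: "y \<in> {0..<p} \<times> {1..h}"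
      and xy: "(\<lambda>(i,j). {i, sh i j}) x = (\<lambda>(i,j). {i, sh i j}) y"
    obtain i j where ij: "x = (i,j)" by fastforce
    obtain i' j' where ij': "y = (i',j')" by fastforce
    have a: "i < p" "1 \<le> j" "j \<le> h" "i' < p" "1 \<le> j'" "j' \<le> h" using x y ij ij' by auto
    have eq: "{i, sh i j} = {i', sh i' j'}" using xy ij ij' by simp
    from eq have "(i = i' \<and> sh i j = sh i' j') \<or> (i = sh i' j' \<and> sh i j = i')"
      by (simp add: doubleton_eq_iff)
    then have "i = i' \<and> j = j'"
    proof
      assume c: "i = i' \<and> sh i j = sh i' j'"
      then have "j = j'" using shf_inj1[of i p j j'] a kp h2 by (auto simp: sh_def)
      then show ?thesis using c by simp
    next
      assume c: "i = sh i' j' \<and> sh i j = i'"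
      have False using c shf_inj2[of i p i' j j'] a kp h2 by (auto simp: sh_def)
      then show ?thesis by simp
    qed
    then show "x = y" using ij ij' by simp
  qed
  have cC1: "card C1 = p * h" unfolding C1_def using injC by (simp add: card_image)
  have injM: "inj_on (\<lambda>i. {i, i+m}) {0..<m}"
  proof (rule inj_onI)
    fix i i' assume "i \<in> {0..<m}" "i' \<in> {0..<m}" "{i, i+m} = {i', i'+m}"
    then show "i = i'" by (auto simp: doubleton_eq_iff)
  qed
  have cM: "card M = (if odd k then m else 0)" unfolding M_def using injM by (simp add: card_image)
  have disj: "C1 \<inter> M = {}"
  proof (rule ccontr)
    assume "C1 \<inter> M \<noteq> {}"
    then obtain i j i' where a: "i < p" "1 \<le> j" "j \<le> h" "i' < m" and eq: "{i, sh i j} = {i', i'+m}"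
      by (auto simp: C1_def M_def split: if_splits)
    from eq have "(i = i' \<and> sh i j = i'+m) \<or> (i = i'+m \<and> sh i j = i')"
      by (simp add: doubleton_eq_iff)
    then show False using shf_M[of i p i' m j] a m1 hm by (simp add: sh_def)
  qed
  have fC1: "finite C1" unfolding C1_def by simp
  have fM: "finite M" unfolding M_def by simp
  have cEc: "card Ec = p * h + (if odd k then m else 0)"
    unfolding Ec_def using card_Un_disjoint[OF fC1 fM disj] cC1 cM by simp
  have kval: "k * p div 2 = p * h + (if odd k then m else 0)"
  proof (cases "odd k")
    case True
    then have "k = 2*h + 1" by (auto simp: h_def)
    then have "k * p = 2 * (h * p) + p" by (simp add: algebra_simps)
    then show ?thesis using True by (simp add: m_def)
  next
    case False
    then have "k = 2*h" by (auto simp: h_def)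
    then show ?thesis using False by simp
  qed
  have deg: "\<And>u. u < p \<Longrightarrow> degree Ec u \<le> k"
  proof -
    fix u assume u: "u < p"
    define mu where "mu = (if u < m then {u, u+m} else {u-m, u})"
    define A where "A = (\<lambda>j. {u, sh u j}) ` {1..h}"
    define B where "B = (\<lambda>j. {ush u j, u}) ` {1..h}"
    define Z where "Z = (if odd k then {mu} else {})"
    have sub: "{e\<in>Ec. u \<in> e} \<subseteq> A \<union> B \<union> Z"
    proof
      fix e assume e: "e \<in> {e\<in>Ec. u \<in> e}"
      then have ue: "u \<in> e" by simp
      from e consider (a) i j where "i < p" "1 \<le> j" "j \<le> h" "e = {i, sh i j}"
        | (b) i where "odd k" "i < m" "e = {i, i+m}"
        by (auto simp: Ec_def C1_def M_def split: if_splits)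
      then show "e \<in> A \<union> B \<union> Z"
      proof cases
        case a
        then have "u = i \<or> u = sh i j" using ue by auto
        then show ?thesis
        proof
          assume "u = i" then show ?thesis using a by (auto simp: A_def)
        next
          assume us: "u = sh i j"
          then have us': "u = shf p i j" by (simp add: sh_def)
          have "j \<le> p" using a kp h2 by linarith
          then have "i = (if j \<le> u then u - j else u + p - j)" using shf_inv[OF a(1) _ us'] by blast
          then have "i = ush u j" by (simp add: ush_def)
          then have "e = {ush u j, u}" using a us by simp
          then show ?thesis using a by (auto simp: B_def)
        qed
      next
        case b
        then have "u = i \<or> u = i + m" using ue by auto
        then have "e = mu" using b by (auto simp: mu_def)
        then show ?thesis using b by (auto simp: Z_def)
      qed
    qed
    have "card {e\<in>Ec. u \<in> e} \<le> card (A \<union> B \<union> Z)"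
      by (rule card_mono[OF _ sub]) (simp add: A_def B_def Z_def)
    also have "\<dots> \<le> card A + card B + card Z" by (meson card_Un_le add_le_mono order_trans le_refl)
    also have "\<dots> \<le> h + h + (if odd k then 1 else 0)"
    proof -
      have "card A \<le> h" unfolding A_def by (metis card_atLeastAtMost card_image_le finite_atLeastAtMost diff_Suc_1)
      moreover have "card B \<le> h" unfolding B_def by (metis card_atLeastAtMost card_image_le finite_atLeastAtMost diff_Suc_1)
      moreover have "card Z \<le> (if odd k then 1 else 0)" by (simp add: Z_def)
      ultimately show ?thesis by linarith
    qed
    also have "\<dots> \<le> k"
    proof (cases "odd k")
      case True then have "k = 2*h+1" by (auto simp: h_def)
      then show ?thesis using True by simp
    next
      case False then show ?thesis using h2 by simp
    qed
    finally show "degree Ec u \<le> k" by (simp add: degree_def)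
  qed
  have nc: "\<not> contains {0..<p} Ec (T1_verts n) (T1_edges n)"
  proof
    assume "contains {0..<p} Ec (T1_verts n) (T1_edges n)"
    then obtain u where "u \<in> {0..<p}" "degree Ec u \<ge> n - 3" using contains_deg[OF sg n] by blast
    then show False using deg[of u] n by (auto simp: k_def)
  qed
  have "card Ec \<le> ex_num p (T1_verts n) (T1_edges n)" using ex_num_ge[OF sg _ nc] by simp
  then show ?thesis using cEc kval by (simp add: k_def)
qed




lemma ch_suc: "(Suc m choose 2) = (m choose 2) + m"
proof -
  have "(Suc m choose Suc 1) = (m choose 1) + (m choose Suc 1)" by (rule binomial_Suc_Suc)
  then show ?thesis by (simp add: numeral_2_eq_2)
qed
lemma ch_ge1: "m \<ge> 6 \<Longrightarrow> 2*m + 2 \<le> (m choose 2)"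
proof (induction m rule: dec_induct)
  case base then show ?case by (simp add: choose_two)
next
  case (step m) then show ?case by (simp add: ch_suc)
qed

lemma ch_ge2: "d \<ge> 5 \<Longrightarrow> 3*d \<le> (Suc d choose 2)"
proof (induction d rule: dec_induct)
  case base then show ?case by (simp add: choose_two)
next
  case (step m) then show ?case by (simp add: ch_suc)
qed
lemma card2: "card {a,b} \<le> 2" by (cases "a = b") auto

lemma card3: "card {a,b,c} \<le> 3"
  using card_insert_le_m1[of 3 "{b,c}" a] card2[of b c] by simp
lemma card4: "card {a,b,x,y} \<le> 4"
  using card_insert_le_m1[of 4 "{b,x,y}" a] card3[of b x y] by simp

lemma other_end:
  assumes s: "sgraph V E" and e: "e \<in> E" and se: "s \<in> e"
  shows "\<exists>t. e = {s,t} \<and> t \<noteq> s \<and> t \<in> V"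
proof -
  obtain p q where pq: "e = {p,q}" "p \<noteq> q" "p \<in> V" "q \<in> V" using sg_edge[OF s e] by blast
  show ?thesis
  proof (cases "s = p")
    case True then show ?thesis using pq by blast
  next
    case False then have "s = q" using pq se by blast
    then show ?thesis using pq by (intro exI[of _ p]) (auto simp: insert_commute)
  qed
qed

locale hd =
  fixes V :: "'a set" and E :: "'a set set" and n :: nat and v :: 'a and d :: nat
  assumes s: "sgraph V E" and nc: "\<not> contains V E (T1_verts n) (T1_edges n)" and n7: "n \<ge> 7"
    and v: "v \<in> V" and dv: "degree E v = d" and dmax: "\<forall>u\<in>V. degree E u \<le> d"
    and RP: "\<And>S. S \<subseteq> V \<Longrightarrow> card S < n \<Longrightarrow> card S choose 2 \<le> card {e\<in>E. e \<inter> S \<noteq> {}}"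
begin

definition N where "N = {u. {v,u} \<in> E}"

lemma fV: "finite V" using s by (simp add: sgraph_def)
lemma fE: "finite E" using sg_finE[OF s] .
lemma NV: "N \<subseteq> V" using s by (auto simp: N_def dest: sg_edge2)
lemma fN: "finite N" using NV fV finite_subset by blast
lemma vN: "v \<notin> N" using s sg_edge2[of V E v v] by (auto simp: N_def)
lemma cN: "card N = d" using card_nbrs[OF s, of v] dv by (simp add: N_def)
lemma edge_v: "e \<in> E \<Longrightarrow> v \<in> e \<Longrightarrow> \<exists>u\<in>N. e = {v,u}"
  using other_end[OF s] by (fastforce simp: N_def)
lemma vN_edge: "u \<in> N \<Longrightarrow> {v,u} \<in> E" by (simp add: N_def)
lemma deg_le: "degree E u \<le> d"
proof (cases "u \<in> V")
  case True then show ?thesis using dmax by blast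
next
  case False
  have "{e\<in>E. u \<in> e} = {}" using s False by (auto dest: sg_edge)
  then have "degree E u = 0" unfolding degree_def by (metis card.empty)
  then show ?thesis by simp
qed
lemma card_at: "card {e\<in>E. c \<in> e} \<le> d" using deg_le[of c] by (simp add: degree_def)
lemma card_at1: "{c,w} \<in> E \<Longrightarrow> card ({e\<in>E. c \<in> e} - {{c,w}}) \<le> d - 1"
  using card_at[of c] card_Diff_singleton[of "{c,w}" "{e\<in>E. c \<in> e}"] by auto
lemma fin_sub: "X \<subseteq> E \<Longrightarrow> finite X" using fE finite_subset by blast

lemma T_contra:
  assumes "a \<in> N" "b \<in> N" "{a,x} \<in> E" "{b,y} \<in> E" "distinct [v,a,b,x,y]"
    "card (N - {a,b,x,y}) \<ge> n - 5"
  shows False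
  using emb[OF s n7 v vN_edge[OF assms(1)] vN_edge[OF assms(2)] assms(3,4,5)] assms(6) nc
  by (simp add: N_def)

lemma NW_contra:
  assumes a: "a \<in> N" and b: "b \<in> N" and ax: "{a,x} \<in> E" and by': "{b,y} \<in> E"
    and ab: "a \<noteq> b" and xy: "x \<noteq> y" and xN: "x \<notin> N" "x \<noteq> v" and yN: "y \<notin> N" "y \<noteq> v"
    and d3: "d \<ge> n - 3"
  shows False
proof -
  have "N - {a,b,x,y} = N - {a,b}" using xN yN by auto
  moreover have "card (N - {a,b}) \<ge> d - 2"
    using diff_card_le_card_Diff[of "{a,b}" N] cN card2[of a b] by simp
  ultimately have c: "card (N - {a,b,x,y}) \<ge> n - 5" using d3 by simp
  have "distinct [v,a,b,x,y]" using a b ab xy xN yN vN sg_edge2[OF s ax] sg_edge2[OF s by'] by auto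
  then show False using T_contra[OF a b ax by' _ c] by blast
qed

lemma touch_fin: "finite {e\<in>E. e \<inter> S \<noteq> {}}" using fin_sub by auto

lemma case1:
  assumes d1: "d \<ge> n - 1"
  shows False
proof -
  define F where "F = {e\<in>E. v \<notin> e \<and> e \<inter> N \<noteq> {}}"
  have Fform: "\<forall>e\<in>F. \<exists>x y. e = {x,y} \<and> x \<noteq> y"
    using s by (auto simp: F_def dest: sg_edge)
  have shape: "\<And>e. e \<in> F \<Longrightarrow> \<exists>a x. e = {a,x} \<and> a \<in> N \<and> x \<noteq> a \<and> x \<noteq> v \<and> {a,x} \<in> E"
  proof -
    fix e assume e: "e \<in> F"
    then obtain a where a: "a \<in> e" "a \<in> N" by (auto simp: F_def)
    obtain x where x: "e = {a,x}" "x \<noteq> a" using other_end[OF s _ a(1)] e by (auto simp: F_def)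
    have "x \<noteq> v" using e x by (auto simp: F_def)
    then show "\<exists>a x. e = {a,x} \<and> a \<in> N \<and> x \<noteq> a \<and> x \<noteq> v \<and> {a,x} \<in> E"
      using a x e by (auto simp: F_def)
  qed
  have Fint: "\<forall>e\<in>F. \<forall>f\<in>F. e \<inter> f \<noteq> {}"
  proof (intro ballI notI)
    fix e f assume e: "e \<in> F" and f: "f \<in> F" and ef: "e \<inter> f = {}"
    obtain a x where ax: "e = {a,x}" "a \<in> N" "x \<noteq> a" "x \<noteq> v" "{a,x} \<in> E" using shape[OF e] by blast
    obtain b y where bya: "f = {b,y}" "b \<in> N" "y \<noteq> b" "y \<noteq> v" "{b,y} \<in> E" using shape[OF f] by blast
    have dist: "distinct [v,a,b,x,y]" using ax bya ef vN by auto
    have "card (N - {a,b,x,y}) \<ge> d - 4"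
      using diff_card_le_card_Diff[of "{a,b,x,y}" N] cN card4[of a b x y] by simp
    then have "card (N - {a,b,x,y}) \<ge> n - 5" using d1 by simp
    then show False using T_contra[OF ax(2) bya(2) ax(5) bya(5) dist] by blast
  qed
  have lt: "\<And>S. S \<subseteq> V \<Longrightarrow> card S = n - 1 \<Longrightarrow> card {e\<in>E. e \<inter> S \<noteq> {}} \<le> 2*(n-1) + 1 \<Longrightarrow> False"
  proof -
    fix S assume "S \<subseteq> V" "card S = n - 1" "card {e\<in>E. e \<inter> S \<noteq> {}} \<le> 2*(n-1) + 1"
    moreover have "2*(n-1) + 2 \<le> (n-1) choose 2" using ch_ge1[of "n-1"] n7 by simp
    moreover have "card S < n" using \<open>card S = n - 1\<close> n7 by simp
    ultimately have "card S choose 2 \<le> card {e\<in>E. e \<inter> S \<noteq> {}}" "2*(n-1) + 2 \<le> card S choose 2"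
      using RP[of S] by auto
    then show False using \<open>card {e\<in>E. e \<inter> S \<noteq> {}} \<le> 2*(n-1) + 1\<close> by linarith
  qed
  have touchN: "\<And>S e. S \<subseteq> N \<Longrightarrow> e \<in> E \<Longrightarrow> e \<inter> S \<noteq> {} \<Longrightarrow> v \<notin> e \<Longrightarrow> e \<in> F"
    by (auto simp: F_def)
  have touchV: "\<And>S e s. S \<subseteq> N \<Longrightarrow> e \<in> E \<Longrightarrow> s \<in> e \<inter> S \<Longrightarrow> v \<in> e \<Longrightarrow> e = {v,s}"
  proof -
    fix S e s assume "S \<subseteq> N" "e \<in> E" "s \<in> e \<inter> S" "v \<in> e"
    then obtain u where "u \<in> N" "e = {v,u}" using edge_v by blast
    then show "e = {v,s}" using \<open>s \<in> e \<inter> S\<close> \<open>S \<subseteq> N\<close> vN by auto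
  qed
  from intersecting[OF Fform Fint] show False
  proof
    assume c3: "card F \<le> 3"
    obtain S where S: "S \<subseteq> N" "card S = n - 1" "finite S"
      using obtain_subset_with_card_n[of "n-1" N] cN d1 by auto
    have "{e\<in>E. e \<inter> S \<noteq> {}} \<subseteq> (\<lambda>s. {v,s}) ` S \<union> F"
    proof
      fix e assume e: "e \<in> {e\<in>E. e \<inter> S \<noteq> {}}"
      then obtain s where "s \<in> e \<inter> S" by auto
      then show "e \<in> (\<lambda>s. {v,s}) ` S \<union> F"
        using touchV[OF S(1), of e s] touchN[OF S(1), of e] e by (cases "v \<in> e") auto
    qed
    then have "card {e\<in>E. e \<inter> S \<noteq> {}} \<le> card ((\<lambda>s. {v,s}) ` S \<union> F)"
      by (rule card_mono[rotated]) (use S(3) fin_sub[of F] in \<open>auto simp: F_def\<close>)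
    also have "\<dots> \<le> card ((\<lambda>s. {v,s}) ` S) + card F" by (rule card_Un_le)
    also have "\<dots> \<le> (n - 1) + 3" using card_image_le[OF S(3), of "\<lambda>s. {v,s}"] S(2) c3 by linarith
    finally have X: "card {e\<in>E. e \<inter> S \<noteq> {}} \<le> (n - 1) + 3" .
    have "S \<subseteq> V" using S(1) NV by blast
    show False by (rule lt[OF \<open>S \<subseteq> V\<close> S(2)]) (use X n7 in linarith)
  next
    assume "\<exists>c. \<forall>e\<in>F. c \<in> e"
    then obtain c where c: "\<forall>e\<in>F. c \<in> e" by blast
    show False
    proof (cases "c \<notin> N \<or> d \<ge> n")
      case True
      have "card (N - {c}) \<ge> n - 1"
      proof (cases "c \<in> N")
        case True then have "card (N - {c}) = d - 1" using cN by (simp add: card_Diff_singleton)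
        then show ?thesis using \<open>c \<notin> N \<or> d \<ge> n\<close> True by simp
      next
        case False then show ?thesis using cN d1 by simp
      qed
      then obtain S where S: "S \<subseteq> N - {c}" "card S = n - 1" "finite S"
        using obtain_subset_with_card_n[of "n-1" "N - {c}"] by auto
      have SN: "S \<subseteq> N" using S by auto
      have "{e\<in>E. e \<inter> S \<noteq> {}} \<subseteq> (\<lambda>s. {v,s}) ` S \<union> (\<lambda>s. {c,s}) ` S"
      proof
        fix e assume e: "e \<in> {e\<in>E. e \<inter> S \<noteq> {}}"
        then obtain s where sS: "s \<in> e \<inter> S" by auto
        show "e \<in> (\<lambda>s. {v,s}) ` S \<union> (\<lambda>s. {c,s}) ` S"
        proof (cases "v \<in> e")
          case True then show ?thesis using touchV[OF SN, of e s] e sS by auto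
        next
          case False
          then have "e \<in> F" using touchN[OF SN, of e] e by auto
          then have "c \<in> e" using c by blast
          moreover have "c \<noteq> s" using sS S by auto
          moreover obtain t where "e = {s,t}" "t \<noteq> s" using other_end[OF hd.s[OF hd_axioms], of e s] e sS by auto
          ultimately have "e = {c,s}" by auto
          then show ?thesis using sS by auto
        qed
      qed
      then have "card {e\<in>E. e \<inter> S \<noteq> {}} \<le> card ((\<lambda>s. {v,s}) ` S \<union> (\<lambda>s. {c,s}) ` S)"
        by (rule card_mono[rotated]) (use S(3) in auto)
      also have "\<dots> \<le> card ((\<lambda>s. {v,s}) ` S) + card ((\<lambda>s. {c,s}) ` S)" by (rule card_Un_le)
      also have "\<dots> \<le> (n - 1) + (n - 1)"
        using card_image_le[OF S(3), of "\<lambda>s. {v,s}"] card_image_le[OF S(3), of "\<lambda>s. {c,s}"] S(2) by linarith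
      finally have X: "card {e\<in>E. e \<inter> S \<noteq> {}} \<le> (n - 1) + (n - 1)" .
      have "S \<subseteq> V" using SN NV by blast
      show False by (rule lt[OF \<open>S \<subseteq> V\<close> S(2)]) (use X n7 in linarith)
    next
      case False
      then have cN': "c \<in> N" and dn: "d = n - 1" using d1 by auto
      define S where "S = insert v (N - {c})"
      have cS: "card S = n - 1" using cN' cN dn vN fN n7 by (simp add: S_def card_Diff_singleton)
      have SV: "S \<subseteq> V" using NV v by (auto simp: S_def)
      have "{e\<in>E. e \<inter> S \<noteq> {}} \<subseteq> {e\<in>E. v \<in> e} \<union> ({e\<in>E. c \<in> e} - {{c,v}})"
      proof
        fix e assume e: "e \<in> {e\<in>E. e \<inter> S \<noteq> {}}"
        show "e \<in> {e\<in>E. v \<in> e} \<union> ({e\<in>E. c \<in> e} - {{c,v}})"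
        proof (cases "v \<in> e")
          case True then show ?thesis using e by auto
        next
          case False
          then have "e \<inter> (N - {c}) \<noteq> {}" using e by (auto simp: S_def)
          then have "e \<in> F" using False e by (auto simp: F_def)
          then have "c \<in> e" using c by blast
          then show ?thesis using False e by auto
        qed
      qed
      then have "card {e\<in>E. e \<inter> S \<noteq> {}} \<le> card ({e\<in>E. v \<in> e} \<union> ({e\<in>E. c \<in> e} - {{c,v}}))"
        by (rule card_mono[rotated]) (use fin_sub in auto)
      also have "\<dots> \<le> card {e\<in>E. v \<in> e} + card ({e\<in>E. c \<in> e} - {{c,v}})" by (rule card_Un_le)
      also have "\<dots> \<le> d + (d - 1)"
      proof -
        have "{c,v} \<in> E" using vN_edge[OF cN'] by (simp add: insert_commute)
        then show ?thesis using card_at[of v] card_at1[of c v] by linarith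
      qed
      finally have X: "card {e\<in>E. e \<inter> S \<noteq> {}} \<le> d + (d - 1)" .
      show False by (rule lt[OF SV cS]) (use X n7 dn in linarith)
    qed
  qed
qed

definition P where "P = {e\<in>E. v \<notin> e \<and> e \<inter> N \<noteq> {} \<and> \<not> e \<subseteq> N}"

lemma P_shape:
  assumes e: "e \<in> P"
  shows "\<exists>b y. e = {b,y} \<and> b \<in> N \<and> y \<notin> N \<and> y \<noteq> v \<and> {b,y} \<in> E"
proof -
  obtain b where b: "b \<in> e" "b \<in> N" using e by (auto simp: P_def)
  obtain y where y: "e = {b,y}" "y \<noteq> b" using other_end[OF s _ b(1)] e by (auto simp: P_def)
  have "y \<notin> N" using e y b by (auto simp: P_def)
  moreover have "y \<noteq> v" using e y by (auto simp: P_def)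
  ultimately show ?thesis using b y e by (auto simp: P_def)
qed

lemma find_ax:
  assumes conn: "connected_graph V E" and big: "card (insert v N) < card V"
  shows "\<exists>a x. a \<in> N \<and> {a,x} \<in> E \<and> x \<notin> N \<and> x \<noteq> v"
proof -
  have sub: "insert v N \<subseteq> V" using NV v by auto
  have "\<not> V \<subseteq> insert v N" using big card_mono[OF fV] by (meson card_mono fN finite_insert leD)
  then obtain w where w: "w \<in> V" "w \<notin> insert v N" by blast
  obtain a x where ax: "{a,x} \<in> E" "a \<in> insert v N" "x \<notin> insert v N"
    using conn_edge[OF conn _ sub w, of v] by blast
  have "a \<noteq> v"
  proof
    assume "a = v" then have "x \<in> N" using ax by (simp add: N_def)
    then show False using ax by simp
  qed
  then show ?thesis using ax by blast
qed

lemma claim2: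
  assumes d3: "d \<ge> n - 3" and a: "a \<in> N" and ax: "{a,x} \<in> E" and xN: "x \<notin> N" "x \<noteq> v"
  shows "(\<forall>e\<in>P. a \<in> e) \<or> (\<forall>e\<in>P. x \<in> e)"
proof (rule ccontr)
  assume "\<not> ((\<forall>e\<in>P. a \<in> e) \<or> (\<forall>e\<in>P. x \<in> e))"
  then obtain e1 e2 where e1: "e1 \<in> P" "a \<notin> e1" and e2: "e2 \<in> P" "x \<notin> e2" by blast
  obtain b y where b: "e1 = {b,y}" "b \<in> N" "y \<notin> N" "y \<noteq> v" "{b,y} \<in> E" using P_shape[OF e1(1)] by blast
  obtain b' y' where b': "e2 = {b',y'}" "b' \<in> N" "y' \<notin> N" "y' \<noteq> v" "{b',y'} \<in> E" using P_shape[OF e2(1)] by blast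
  have ab: "a \<noteq> b" using b e1 by auto
  have yx: "y = x"
  proof (rule ccontr)
    assume "y \<noteq> x"
    then show False using NW_contra[OF a b(2) ax b(5) ab _ xN b(3,4) d3] by auto
  qed
  have xy': "x \<noteq> y'" using b' e2 by auto
  have ab': "b' = a"
  proof (rule ccontr)
    assume "b' \<noteq> a"
    then show False using NW_contra[OF a b'(2) ax b'(5) _ xy' xN b'(3,4) d3] by auto
  qed
  have "{b,x} \<in> E" "{a,y'} \<in> E" using b yx b' ab' by auto
  then show False using NW_contra[OF b(2) a _ _ _ xy' xN b'(3,4) d3] ab by auto
qed

lemma case2:
  assumes conn: "connected_graph V E" and cV: "card V \<ge> n" and d2: "d = n - 2"
  shows False
proof -
  have cS: "card (insert v N) = n - 1" using cN vN fN d2 n7 by simp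
  obtain a x where ax: "a \<in> N" "{a,x} \<in> E" "x \<notin> N" "x \<noteq> v"
    using find_ax[OF conn] cS cV n7 by fastforce
  have cl1: "\<And>e. e \<in> E \<Longrightarrow> e \<subseteq> N \<Longrightarrow> a \<in> e"
  proof (rule ccontr)
    fix e assume e: "e \<in> E" "e \<subseteq> N" "a \<notin> e"
    obtain b y where by': "e = {b,y}" "b \<noteq> y" using sg_edge[OF s e(1)] by blast
    have bN: "b \<in> N" "y \<in> N" using by' e by auto
    have dist: "distinct [v,a,b,x,y]" using by' bN ax e vN by auto
    have "N - {a,b,x,y} = N - {a,b,y}" using ax by auto
    moreover have "card (N - {a,b,y}) \<ge> d - 3"
      using diff_card_le_card_Diff[of "{a,b,y}" N] cN card3[of a b y] by simp
    ultimately have "card (N - {a,b,x,y}) \<ge> n - 5" using d2 by simp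
    then show False using T_contra[OF ax(1) bN(1) ax(2) _ dist] e by' by auto
  qed
  have "d \<ge> n - 3" using d2 by simp
  then obtain c where c: "\<forall>e\<in>P. c \<in> e" using claim2[OF _ ax] by blast
  define S where "S = insert v N"
  have "{e\<in>E. e \<inter> S \<noteq> {}} \<subseteq> {e\<in>E. v \<in> e} \<union> ({e\<in>E. a \<in> e} - {{a,v}}) \<union> {e\<in>E. c \<in> e}"
  proof
    fix e assume e: "e \<in> {e\<in>E. e \<inter> S \<noteq> {}}"
    show "e \<in> {e\<in>E. v \<in> e} \<union> ({e\<in>E. a \<in> e} - {{a,v}}) \<union> {e\<in>E. c \<in> e}"
    proof (cases "v \<in> e")
      case True then show ?thesis using e by auto
    next
      case False
      then have mN: "e \<inter> N \<noteq> {}" using e by (auto simp: S_def)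
      show ?thesis
      proof (cases "e \<subseteq> N")
        case True then show ?thesis using cl1[of e] e False by auto
      next
        case nf: False
        then have "e \<in> P" using e False mN by (auto simp: P_def)
        then show ?thesis using c e by auto
      qed
    qed
  qed
  then have "card {e\<in>E. e \<inter> S \<noteq> {}} \<le> card ({e\<in>E. v \<in> e} \<union> ({e\<in>E. a \<in> e} - {{a,v}}) \<union> {e\<in>E. c \<in> e})"
    by (rule card_mono[rotated]) (use fin_sub in auto)
  also have "\<dots> \<le> card {e\<in>E. v \<in> e} + card ({e\<in>E. a \<in> e} - {{a,v}}) + card {e\<in>E. c \<in> e}"
    by (meson card_Un_le add_le_mono order_trans le_refl)
  also have "\<dots> \<le> d + (d - 1) + d"
  proof -
    have "{a,v} \<in> E" using vN_edge[OF ax(1)] by (simp add: insert_commute)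
    then show ?thesis using card_at[of v] card_at1[of a v] card_at[of c] by linarith
  qed
  finally have X: "card {e\<in>E. e \<inter> S \<noteq> {}} \<le> d + (d - 1) + d" .
  have SV: "S \<subseteq> V" using NV v by (auto simp: S_def)
  have "card S choose 2 \<le> card {e\<in>E. e \<inter> S \<noteq> {}}" using RP[OF SV] cS n7 by (simp add: S_def)
  moreover have "card S = Suc d" using cS d2 n7 by (simp add: S_def)
  moreover have "3 * d \<le> Suc d choose 2" using ch_ge2[of d] d2 n7 by simp
  ultimately have "3 * d \<le> card {e\<in>E. e \<inter> S \<noteq> {}}" by simp
  then show False using X d2 n7 by linarith
qed

lemma case3:
  assumes conn: "connected_graph V E" and cV: "card V \<ge> n" and d3: "d = n - 3"
  shows False
proof -
  have cS0: "card (insert v N) = n - 2" using cN vN fN d3 n7 by simp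
  obtain a x where ax: "a \<in> N" "{a,x} \<in> E" "x \<notin> N" "x \<noteq> v"
    using find_ax[OF conn] cS0 cV n7 by fastforce
  define S where "S = insert x (insert v N)"
  have cS: "card S = Suc (Suc d)" using cN vN fN ax d3 n7 by (simp add: S_def)
  have SV: "S \<subseteq> V" using NV v sg_edge2[OF s ax(2)] by (auto simp: S_def)
  have RPS: "card S choose 2 \<le> card {e\<in>E. e \<inter> S \<noteq> {}}" using RP[OF SV] cS d3 n7 by simp
  have ch: "card S choose 2 = (d choose 2) + d + Suc d" using cS by (simp add: ch_suc)
  have "d \<ge> n - 3" using d3 by simp
  from claim2[OF this ax] show False
  proof
    assume ca: "\<forall>e\<in>P. a \<in> e"
    have dd: "d = Suc (d - 1)" using d3 n7 by simp
    have ch': "(d choose 2) = ((d - 1) choose 2) + (d - 1)" using ch_suc[of "d-1"] dd by simp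
    have "{e\<in>E. e \<inter> S \<noteq> {}} \<subseteq> {e\<in>E. v \<in> e} \<union> {e\<in>E. e \<subseteq> N - {a}} \<union> ({e\<in>E. a \<in> e} - {{a,v}}) \<union> ({e\<in>E. x \<in> e} - {{x,a}})"
    proof
      fix e assume e: "e \<in> {e\<in>E. e \<inter> S \<noteq> {}}"
      show "e \<in> {e\<in>E. v \<in> e} \<union> {e\<in>E. e \<subseteq> N - {a}} \<union> ({e\<in>E. a \<in> e} - {{a,v}}) \<union> ({e\<in>E. x \<in> e} - {{x,a}})"
      proof (cases "v \<in> e")
        case True then show ?thesis using e by auto
      next
        case nv: False
        show ?thesis
        proof (cases "a \<in> e")
          case True then show ?thesis using e nv by auto
        next
          case na: False
          show ?thesis
          proof (cases "x \<in> e")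
            case True then show ?thesis using e na by auto
          next
            case nx: False
            then have mN: "e \<inter> N \<noteq> {}" using e nv by (auto simp: S_def)
            have "e \<subseteq> N"
            proof (rule ccontr)
              assume "\<not> e \<subseteq> N"
              then have "e \<in> P" using e nv mN by (auto simp: P_def)
              then show False using ca na by blast
            qed
            then show ?thesis using e na by auto
          qed
        qed
      qed
    qed
    then have "card {e\<in>E. e \<inter> S \<noteq> {}} \<le> card ({e\<in>E. v \<in> e} \<union> {e\<in>E. e \<subseteq> N - {a}} \<union> ({e\<in>E. a \<in> e} - {{a,v}}) \<union> ({e\<in>E. x \<in> e} - {{x,a}}))"
      by (rule card_mono[rotated]) (use fin_sub in auto)
    also have "\<dots> \<le> card {e\<in>E. v \<in> e} + card {e\<in>E. e \<subseteq> N - {a}} + card ({e\<in>E. a \<in> e} - {{a,v}}) + card ({e\<in>E. x \<in> e} - {{x,a}})"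
      by (meson card_Un_le add_le_mono order_trans le_refl)
    also have "\<dots> \<le> d + ((d - 1) choose 2) + (d - 1) + (d - 1)"
    proof -
      have "{a,v} \<in> E" using vN_edge[OF ax(1)] by (simp add: insert_commute)
      moreover have "{x,a} \<in> E" using ax(2) by (simp add: insert_commute)
      moreover have "card {e\<in>E. e \<subseteq> N - {a}} \<le> (d - 1) choose 2"
      proof -
        have "N - {a} \<subseteq> V" using NV by blast
        moreover have "card (N - {a}) = d - 1" using cN ax(1) by (simp add: card_Diff_singleton)
        ultimately show ?thesis using edges_in_choose[OF s, of "N - {a}"] by simp
      qed
      ultimately show ?thesis using card_at[of v] card_at1[of a v] card_at1[of x a] by linarith
    qed
    finally show False using RPS ch ch' by linarith
  next
    assume cx: "\<forall>e\<in>P. x \<in> e"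
    have "{e\<in>E. e \<inter> S \<noteq> {}} \<subseteq> {e\<in>E. v \<in> e} \<union> {e\<in>E. e \<subseteq> N} \<union> {e\<in>E. x \<in> e}"
    proof
      fix e assume e: "e \<in> {e\<in>E. e \<inter> S \<noteq> {}}"
      show "e \<in> {e\<in>E. v \<in> e} \<union> {e\<in>E. e \<subseteq> N} \<union> {e\<in>E. x \<in> e}"
      proof (cases "v \<in> e \<or> x \<in> e")
        case True then show ?thesis using e by auto
      next
        case False
        then have mN: "e \<inter> N \<noteq> {}" using e by (auto simp: S_def)
        have "e \<subseteq> N"
        proof (rule ccontr)
          assume "\<not> e \<subseteq> N"
          then have "e \<in> P" using e False mN by (auto simp: P_def)
          then show False using cx False by blast
        qed
        then show ?thesis using e by auto
      qed
    qed
    then have "card {e\<in>E. e \<inter> S \<noteq> {}} \<le> card ({e\<in>E. v \<in> e} \<union> {e\<in>E. e \<subseteq> N} \<union> {e\<in>E. x \<in> e})"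
      by (rule card_mono[rotated]) (use fin_sub in auto)
    also have "\<dots> \<le> card {e\<in>E. v \<in> e} + card {e\<in>E. e \<subseteq> N} + card {e\<in>E. x \<in> e}"
      by (meson card_Un_le add_le_mono order_trans le_refl)
    also have "\<dots> \<le> d + (d choose 2) + d"
    proof -
      have "card {e\<in>E. e \<subseteq> N} \<le> d choose 2" using edges_in_choose[OF s NV] cN by simp
      then show ?thesis using card_at[of v] card_at[of x] by linarith
    qed
    finally show False using RPS ch by linarith
  qed
qed

end

theorem lemma2p2:
  fixes p n :: nat and V :: "'a set" and E :: "'a set set"
  assumes "n \<ge> 7" and "p \<ge> n"
    and "in_Ex p (T1_verts n) (T1_edges n) V E"
    and "connected_graph V E"
  shows "max_degree V E = n - 4 \<and> card E = ((n - 4) * p) div 2"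
proof -
  have n7: "n \<ge> 7" and pn: "p \<ge> n" and G: "in_Ex p (T1_verts n) (T1_edges n) V E"
    and conn: "connected_graph V E" using assms by auto
  have s: "sgraph V E" and cV: "card V = p" and nc: "\<not> contains V E (T1_verts n) (T1_edges n)"
    and cE: "card E = ex_num p (T1_verts n) (T1_edges n)" using G by (auto simp: in_Ex_def)
  have fV: "finite V" using s by (simp add: sgraph_def)
  have Vne: "V \<noteq> {}" using cV pn n7 by auto
  define d where "d = max_degree V E"
  have dM: "d = Max (degree E ` V)" by (simp add: d_def max_degree_def)
  have "d \<in> degree E ` V" using Max_in[of "degree E ` V"] fV Vne dM by simp
  then obtain v where v: "v \<in> V" "degree E v = d" by auto
  have dmax: "\<forall>u\<in>V. degree E u \<le> d" using dM fV by auto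
  have RP: "\<And>S. S \<subseteq> V \<Longrightarrow> card S < n \<Longrightarrow> card S choose 2 \<le> card {e\<in>E. e \<inter> S \<noteq> {}}"
    using replacement[OF n7 G] by (simp add: T1_verts_def)
  interpret hd V E n v d
    by unfold_locales (use s nc n7 v dmax RP in auto)
  have dle: "d \<le> n - 4"
  proof (rule ccontr)
    assume "\<not> d \<le> n - 4"
    then consider "d \<ge> n - 1" | "d = n - 2" | "d = n - 3" by linarith
    then show False
    proof cases
      case 1 then show False by (rule case1)
    next
      case 2 then show False using case2[OF conn] cV pn by auto
    next
      case 3 then show False using case3[OF conn] cV pn by auto
    qed
  qed
  have hs: "2 * card E \<le> p * d"
  proof -
    have "2 * card E = (\<Sum>u\<in>V. degree E u)" using handshake[OF s] by simp
    also have "\<dots> \<le> of_nat (card V) * d" by (rule sum_bounded_above) (use dmax in auto)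
    finally show ?thesis using cV by simp
  qed
  have lb: "(n-4)*p div 2 \<le> card E" using lower_bound[OF n7 pn] cE by simp
  have "p * d \<le> p * (n - 4)" using dle by (rule mult_le_mono2)
  then have ub: "2 * card E \<le> (n-4) * p" using hs by (metis mult.commute order_trans)
  then have eqE: "card E = (n-4)*p div 2" using lb by linarith
  have "d = n - 4"
  proof (rule ccontr)
    assume "d \<noteq> n - 4"
    then have "d \<le> n - 5" using dle by linarith
    then have "p * d \<le> p * (n - 5)" by (rule mult_le_mono2)
    then have A: "2 * card E \<le> (n - 5) * p" using hs by (metis mult.commute order_trans)
    have "n - 4 = Suc (n - 5)" using n7 by simp
    then have B: "(n-4)*p = (n-5)*p + p" by simp
    have C: "(n-4)*p \<le> 2 * ((n-4)*p div 2) + 1" by linarith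
    show False using A B C eqE pn n7 by linarith
  qed
  then show ?thesis using eqE by (simp add: d_def)
qed


end
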